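(* Consider the two-species BGK system described in the context, under the assumptions listed there. Let $(f_1,f_2)$ be a classical solution with positive initial data $f_1^0,f_2^0>0$. Then $f_1,f_2>0$.
   Context: Fix $N\ge1$, masses $m_1,m_2>0$, $\varepsilon\in(0,1]$, $\alpha\in[0,1]$, $\delta$ with $\frac{\frac{m_1}{m_2}\varepsilon-1}{1+\frac{m_1}{m_2}\varepsilon}\le\delta\le 1$, and $\gamma$ with $0\le\gamma\le\frac{m_1}{N}(1-\delta)\big[(1+\frac{m_1}{m_2}\varepsilon)\delta+1-\frac{m_1}{m_2}\varepsilon\big]$. For $f_k(x,v,t)$ define $n_k=\int f_k\,dv$, $n_ku_k=\int vf_k\,dv$, $Nn_kT_k=\int m_k|v-u_k|^2f_k\,dv$, and $u_{12}=\delta u_1+(1-\delta)u_2$, $u_{21}=u_2-\frac{m_1}{m_2}\varepsilon(1-\delta)(u_2-u_1)$, $T_{12}=\alpha T_1+(1-\alpha)T_2+\gamma|u_1-u_2|^2$, $T_{21}=\big[\frac1N\varepsilon m_1(1-\delta)(\frac{m_1}{m_2}\varepsilon(\delta-1)+\delta+1)-\varepsilon\gamma\big]|u_1-u_2|^2+\varepsilon(1-\alpha)T_1+(1-\varepsilon(1-\alpha))T_2$. Maxwellians: $M_k=\frac{n_k}{(2\pi T_k/m_k)^{N/2}}e^{-\frac{|v-u_k|^2}{2T_k/m_k}}$, $M_{12}=\frac{n_1}{(2\pi T_{12}/m_1)^{N/2}}e^{-\frac{|v-u_{12}|^2}{2T_{12}/m_1}}$, $M_{21}=\frac{n_2}{(2\pi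 T_{21}/m_2)^{N/2}}e^{-\frac{|v-u_{21}|^2}{2T_{21}/m_2}}$. The system is $\partial_tf_1+v\cdot\nabla_xf_1=\nu_{11}n_1(M_1-f_1)+\nu_{12}n_2(M_{12}-f_1)$, $\partial_tf_2+v\cdot\nabla_xf_2=\nu_{22}n_2(M_2-f_2)+\nu_{21}n_1(M_{21}-f_2)$, $f_k(t=0)=f_k^0$. Assumptions: (1) periodicity in $x$ with periods $a_1,\dots,a_N>0$ for solutions and initial data, spatial domain $\Lambda=\{x: x_i\in(0,a_i)\}$; (2) $f_k^0\ge0$, $(1+|v|^2)f_k^0\in L^1(\Lambda\times\mathbb{R}^N)$, $\int\!\!\int f_k^0\,dv\,dx=1$; (3) $\sup_{x,v}f_k^0(x,v)(1+|v|^q)=\frac12A_0<\infty$ for some $q>N+2$; (4) $\gamma_k(x,t):=\int f_k^0(x-vt,v)\,dv\ge C_0>0$ for all $t$; (5) $\nu_{jk}n_k=\tilde\nu_{jk}\frac{n_k}{n_1+n_2}$ with constants $\tilde\nu_{jk}>0$. *)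

theory Defs
  imports "HOL-Analysis.Analysis"
begin

definition dens :: "(real^'n \<Rightarrow> real) \<Rightarrow> real" where
  "dens g = (LINT v|lborel. g v)"

definition vel :: "(real^'n \<Rightarrow> real) \<Rightarrow> real^'n" where
  "vel g = (1 / dens g) *\<^sub>R (LINT v|lborel. g v *\<^sub>R v)"

definition temp :: "real \<Rightarrow> (real^'n \<Rightarrow> real) \<Rightarrow> real" where
  "temp m g = (LINT v|lborel. m * (norm (v - vel g))\<^sup>2 * g v) / (real CARD('n) * dens g)"

definition maxwellian :: "real \<Rightarrow> real \<Rightarrow> real^'n \<Rightarrow> real \<Rightarrow> real^'n \<Rightarrow> real" where
  "maxwellian m n u T v =
     n / ((2 * pi * T / m) powr (real CARD('n) / 2)) * exp (- (norm (v - u))\<^sup>2 / (2 * T / m))"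

definition u12 :: "real \<Rightarrow> 'a::real_vector \<Rightarrow> 'a \<Rightarrow> 'a" where
  "u12 \<delta> u1 u2 = \<delta> *\<^sub>R u1 + (1 - \<delta>) *\<^sub>R u2"

definition u21 :: "real \<Rightarrow> real \<Rightarrow> real \<Rightarrow> real \<Rightarrow> 'a::real_vector \<Rightarrow> 'a \<Rightarrow> 'a" where
  "u21 m1 m2 \<epsilon> \<delta> u1 u2 = u2 - (m1 / m2 * \<epsilon> * (1 - \<delta>)) *\<^sub>R (u2 - u1)"

definition T12 :: "real \<Rightarrow> real \<Rightarrow> real^'n \<Rightarrow> real^'n \<Rightarrow> real \<Rightarrow> real \<Rightarrow> real" where
  "T12 \<alpha> \<gamma> u1 u2 T1 T2 = \<alpha> * T1 + (1 - \<alpha>) * T2 + \<gamma> * (norm (u1 - u2))\<^sup>2"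

definition T21 :: "real \<Rightarrow> real \<Rightarrow> real \<Rightarrow> real \<Rightarrow> real \<Rightarrow> real \<Rightarrow> real^'n \<Rightarrow> real^'n \<Rightarrow> real \<Rightarrow> real \<Rightarrow> real" where
  "T21 m1 m2 \<epsilon> \<alpha> \<delta> \<gamma> u1 u2 T1 T2 =
     (1 / real CARD('n) * \<epsilon> * m1 * (1 - \<delta>) * (m1 / m2 * \<epsilon> * (\<delta> - 1) + \<delta> + 1) - \<epsilon> * \<gamma>)
       * (norm (u1 - u2))\<^sup>2
     + \<epsilon> * (1 - \<alpha>) * T1 + (1 - \<epsilon> * (1 - \<alpha>)) * T2"

definition periodic_x :: "('n \<Rightarrow> real) \<Rightarrow> (real^'n \<Rightarrow> 'b) \<Rightarrow> bool" where
  "periodic_x a h \<longleftrightarrow> (\<forall>i x. h (x + a i *\<^sub>R axis i 1) = h x)"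

definition cell :: "('n \<Rightarrow> real) \<Rightarrow> (real^'n) set" where
  "cell a = {x. \<forall>i. 0 < x $ i \<and> x $ i < a i}"

definition admissible_initial ::
  "('n \<Rightarrow> real) \<Rightarrow> real \<Rightarrow> (real^'n \<Rightarrow> real^'n \<Rightarrow> real) \<Rightarrow> bool" where
  "admissible_initial a C0 f0 \<longleftrightarrow>
     periodic_x a f0 \<and>
     (\<forall>x v. 0 \<le> f0 x v) \<and>
     integrable lborel (\<lambda>p. indicator (cell a \<times> UNIV) p * ((1 + (norm (snd p))\<^sup>2) * f0 (fst p) (snd p))) \<and>
     (LINT p|lborel. indicator (cell a \<times> UNIV) p * f0 (fst p) (snd p)) = 1 \<and>
     (\<exists>q A0. q > real CARD('n) + 2 \<and> (\<forall>x v. f0 x v * (1 + norm v powr q) \<le> A0 / 2)) \<and>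
     (\<forall>x t. C0 \<le> (LINT v|lborel. f0 (x - t *\<^sub>R v) v))"

end

theory Submission imports Defs begin
lemma ode_pos:
  fixes g G :: "real \<Rightarrow> real" and K t :: real
  assumes cont: "continuous_on {0..t} g"
    and der: "\<And>s. 0 < s \<Longrightarrow> s < t \<Longrightarrow> (g has_real_derivative G s) (at s)"
    and ineq: "\<And>s. 0 < s \<Longrightarrow> s < t \<Longrightarrow> g s \<ge> 0 \<Longrightarrow> G s \<ge> - K * g s"
    and g0: "g 0 > 0" and t0: "t \<ge> 0"
  shows "g t > 0"
proof (rule ccontr)
  assume "\<not> g t > 0"
  define S where "S = {0..t} \<inter> g -` {..0}"
  have cS: "closed S" unfolding S_def by (rule continuous_closed_preimage[OF cont]) auto
  have tS: "t \<in> S" using \<open>\<not> g t > 0\<close> t0 by (auto simp: S_def)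
  have bS: "bdd_below S" unfolding S_def by (auto intro: bdd_belowI[of _ 0])
  define r where "r = Inf S"
  have rS: "r \<in> S" unfolding r_def using closed_contains_Inf[OF _ bS cS] tS by blast
  have r_le: "\<And>s. s \<in> S \<Longrightarrow> r \<le> s" unfolding r_def using bS by (simp add: cInf_lower)
  have r0: "0 \<le> r" "r \<le> t" "g r \<le> 0" using rS by (auto simp: S_def)
  have rpos: "r \<noteq> 0" using r0 g0 by auto
  have gpos: "\<And>s. 0 \<le> s \<Longrightarrow> s < r \<Longrightarrow> g s > 0"
  proof (rule ccontr)
    fix s assume "0 \<le> s" "s < r" "\<not> g s > 0"
    then have "s \<in> S" using r0 by (auto simp: S_def)
    then show False using r_le \<open>s < r\<close> by force
  qed
  define h where "h s = exp (K * s) * g s" for s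
  have "h 0 \<le> h r"
  proof (rule DERIV_nonneg_imp_increasing_open[OF r0(1)])
    fix s assume s: "0 < s" "s < r"
    have "(h has_real_derivative (K * exp (K * s) * g s + exp (K * s) * G s)) (at s)"
      unfolding h_def using der[of s] s r0
      by (auto intro!: derivative_eq_intros)
    moreover have "K * exp (K * s) * g s + exp (K * s) * G s = exp (K * s) * (G s + K * g s)"
      by (simp add: algebra_simps)
    moreover have "G s + K * g s \<ge> 0" using ineq[of s] gpos[of s] s r0 by force
    ultimately show "\<exists>y. (h has_real_derivative y) (at s) \<and> 0 \<le> y" by auto
  next
    show "continuous_on {0..r} h" unfolding h_def
      by (intro continuous_intros continuous_on_subset[OF cont]) (use r0 in auto)
  qed
  moreover have "h r \<le> 0" unfolding h_def using r0 by (simp add: mult_nonpos_nonneg mult_nonneg_nonpos)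
  moreover have "h 0 > 0" unfolding h_def using g0 by simp
  ultimately show False by linarith
qed
lemma char_pos:
  fixes f :: "real^'n \<Rightarrow> real^'n \<Rightarrow> real \<Rightarrow> real"
    and Df :: "real^'n \<Rightarrow> real^'n \<Rightarrow> real \<Rightarrow> ((real^'n) \<times> real \<Rightarrow> real)"
  assumes cont: "continuous_on (UNIV \<times> {0..}) (\<lambda>p. f (fst p) v (snd p))"
    and diff: "\<forall>x v t. t > 0 \<longrightarrow> ((\<lambda>p. f (fst p) v (snd p)) has_derivative Df x v t) (at (x, t))"
    and ineq: "\<And>x t. t > 0 \<Longrightarrow> f x v t \<ge> 0 \<Longrightarrow> Df x v t (v, 1) \<ge> - K * f x v t"
    and init: "\<And>x. f x v 0 > 0" and t0: "t \<ge> 0"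
  shows "f x v t > 0"
proof -
  define x0 where "x0 = x - t *\<^sub>R v"
  define g where "g s = f (x0 + s *\<^sub>R v) v s" for s
  define G where "G s = Df (x0 + s *\<^sub>R v) v s (v, 1)" for s
  have "g t > 0"
  proof (rule ode_pos[where G = G and K = K and g = g and t = t])
    have "continuous_on {0..t} ((\<lambda>p. f (fst p) v (snd p)) \<circ> (\<lambda>s. (x0 + s *\<^sub>R v, s)))"
      by (rule continuous_on_compose[OF _ continuous_on_subset[OF cont]])
         (auto intro!: continuous_intros)
    then show "continuous_on {0..t} g" by (simp add: g_def[abs_def] o_def)
  next
    fix s :: real assume s: "0 < s" "s < t"
    have d1: "((\<lambda>s. (x0 + s *\<^sub>R v, s)) has_derivative (\<lambda>h. (h *\<^sub>R v, h))) (at s)"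
      by (auto intro!: derivative_eq_intros)
    have d2: "((\<lambda>p. f (fst p) v (snd p)) has_derivative Df (x0 + s *\<^sub>R v) v s) (at (x0 + s *\<^sub>R v, s))"
      using diff s by auto
    have lin: "linear (Df (x0 + s *\<^sub>R v) v s)"
      using d2 by (simp add: has_derivative_def bounded_linear.linear)
    have "(g has_derivative (Df (x0 + s *\<^sub>R v) v s \<circ> (\<lambda>h. (h *\<^sub>R v, h)))) (at s)"
      using diff_chain_at[OF d1, of "\<lambda>p. f (fst p) v (snd p)"] d2 by (simp add: g_def[abs_def] o_def)
    moreover have "(Df (x0 + s *\<^sub>R v) v s \<circ> (\<lambda>h. (h *\<^sub>R v, h))) = (\<lambda>h. G s * h)"
    proof
      fix h :: real
      have "(h *\<^sub>R v, h) = h *\<^sub>R (v, 1)" by simp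
      then show "(Df (x0 + s *\<^sub>R v) v s \<circ> (\<lambda>h. (h *\<^sub>R v, h))) h = G s * h"
        using linear_scale[OF lin, of h "(v,1)"] by (simp add: G_def mult.commute)
    qed
    ultimately show "(g has_real_derivative G s) (at s)"
      by (simp add: has_field_derivative_def)
  next
    fix s :: real assume "0 < s" "s < t" "g s \<ge> 0"
    then show "G s \<ge> - K * g s" using ineq unfolding G_def g_def by auto
  next
    show "g 0 > 0" using init by (simp add: g_def)
  qed (use t0 in auto)
  then show ?thesis by (simp add: g_def x0_def)
qed
lemma maxwellian_nonneg: "n \<ge> 0 \<Longrightarrow> maxwellian m n u T v \<ge> 0"
  unfolding maxwellian_def by (intro mult_nonneg_nonneg divide_nonneg_nonneg) auto

lemma coef_bounds:
  fixes nu n1 n2 :: real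
  assumes "nu > 0" "n1 > 0" "n2 > 0"
  shows "nu * n1 / (n1 + n2) \<ge> 0" "nu * n1 / (n1 + n2) \<le> nu"
proof -
  show "nu * n1 / (n1 + n2) \<ge> 0" using assms by simp
  have "nu * n1 \<le> nu * (n1 + n2)" using assms by simp
  then show "nu * n1 / (n1 + n2) \<le> nu" using assms by (simp add: divide_le_eq)
qed

lemma bgk_ineq:
  fixes c1 c2 a b M M' y :: real
  assumes "0 \<le> c1" "c1 \<le> a" "0 \<le> c2" "c2 \<le> b" "0 \<le> M" "0 \<le> M'" "0 \<le> y"
  shows "c1 * (M - y) + c2 * (M' - y) \<ge> - (a + b) * y"
proof -
  have "c1 * (M - y) \<ge> - c1 * y" using assms by (simp add: algebra_simps)
  moreover have "c2 * (M' - y) \<ge> - c2 * y" using assms by (simp add: algebra_simps)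
  moreover have "c1 * y \<le> a * y" "c2 * y \<le> b * y" using assms by (auto intro: mult_right_mono)
  ultimately show ?thesis by (simp add: algebra_simps)
qed

theorem mainTheorem9:
  fixes f1 f2 :: "real^'n \<Rightarrow> real^'n \<Rightarrow> real \<Rightarrow> real"
    and f10 f20 :: "real^'n \<Rightarrow> real^'n \<Rightarrow> real"
    and Df1 Df2 :: "real^'n \<Rightarrow> real^'n \<Rightarrow> real \<Rightarrow> ((real^'n) \<times> real \<Rightarrow> real)"
    and a :: "'n \<Rightarrow> real"
    and m1 m2 \<epsilon> \<alpha> \<delta> \<gamma> C0 \<nu>11 \<nu>12 \<nu>21 \<nu>22 :: real
  assumes m_pos: "m1 > 0" "m2 > 0"
    and eps: "0 < \<epsilon>" "\<epsilon> \<le> 1"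
    and alpha: "0 \<le> \<alpha>" "\<alpha> \<le> 1"
    and delta: "(m1 / m2 * \<epsilon> - 1) / (1 + m1 / m2 * \<epsilon>) \<le> \<delta>" "\<delta> \<le> 1"
    and gamma: "0 \<le> \<gamma>"
      "\<gamma> \<le> m1 / real CARD('n) * (1 - \<delta>) * ((1 + m1 / m2 * \<epsilon>) * \<delta> + 1 - m1 / m2 * \<epsilon>)"
    and periods: "\<forall>i. a i > 0"
    and C0_pos: "C0 > 0"
    and init1: "admissible_initial a C0 f10" and init2: "admissible_initial a C0 f20"
    and init_pos: "\<forall>x v. f10 x v > 0" "\<forall>x v. f20 x v > 0"
    and nu_pos: "\<nu>11 > 0" "\<nu>12 > 0" "\<nu>21 > 0" "\<nu>22 > 0"
    \<comment> \<open>periodicity of the solution\<close>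
    and per_sol: "\<forall>v t. periodic_x a (\<lambda>x. f1 x v t)" "\<forall>v t. periodic_x a (\<lambda>x. f2 x v t)"
    \<comment> \<open>classical regularity: continuous for t \<ge> 0, differentiable in (x,t) for t > 0\<close>
    and cont: "\<forall>v. continuous_on (UNIV \<times> {0..}) (\<lambda>p. f1 (fst p) v (snd p))"
              "\<forall>v. continuous_on (UNIV \<times> {0..}) (\<lambda>p. f2 (fst p) v (snd p))"
    and diff: "\<forall>x v t. t > 0 \<longrightarrow> ((\<lambda>p. f1 (fst p) v (snd p)) has_derivative Df1 x v t) (at (x, t))"
              "\<forall>x v t. t > 0 \<longrightarrow> ((\<lambda>p. f2 (fst p) v (snd p)) has_derivative Df2 x v t) (at (x, t))"
    \<comment> \<open>initial condition\<close>
    and ic: "\<forall>x v. f1 x v 0 = f10 x v" "\<forall>x v. f2 x v 0 = f20 x v"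
    \<comment> \<open>macroscopic quantities are well defined (so the Maxwellians make sense)\<close>
    and mom: "\<forall>x t. t \<ge> 0 \<longrightarrow> integrable lborel (\<lambda>v. (1 + (norm v)\<^sup>2) * f1 x v t)"
             "\<forall>x t. t \<ge> 0 \<longrightarrow> integrable lborel (\<lambda>v. (1 + (norm v)\<^sup>2) * f2 x v t)"
    and dens_pos: "\<forall>x t. t \<ge> 0 \<longrightarrow> dens (\<lambda>v. f1 x v t) > 0"
                  "\<forall>x t. t \<ge> 0 \<longrightarrow> dens (\<lambda>v. f2 x v t) > 0"
    and temp_pos: "\<forall>x t. t \<ge> 0 \<longrightarrow> temp m1 (\<lambda>v. f1 x v t) > 0"
                  "\<forall>x t. t \<ge> 0 \<longrightarrow> temp m2 (\<lambda>v. f2 x v t) > 0"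
    \<comment> \<open>the BGK equations; the transport term is \<partial>_t f + v \<cdot> \<nabla>_x f = Df (v, 1)\<close>
    and eq1: "\<forall>x v t. t > 0 \<longrightarrow>
      (let n1 = dens (\<lambda>w. f1 x w t); n2 = dens (\<lambda>w. f2 x w t);
           uu1 = vel (\<lambda>w. f1 x w t); uu2 = vel (\<lambda>w. f2 x w t);
           TT1 = temp m1 (\<lambda>w. f1 x w t); TT2 = temp m2 (\<lambda>w. f2 x w t)
       in Df1 x v t (v, 1) =
            \<nu>11 * n1 / (n1 + n2) * (maxwellian m1 n1 uu1 TT1 v - f1 x v t)
          + \<nu>12 * n2 / (n1 + n2) *
              (maxwellian m1 n1 (u12 \<delta> uu1 uu2) (T12 \<alpha> \<gamma> uu1 uu2 TT1 TT2) v - f1 x v t))"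
    and eq2: "\<forall>x v t. t > 0 \<longrightarrow>
      (let n1 = dens (\<lambda>w. f1 x w t); n2 = dens (\<lambda>w. f2 x w t);
           uu1 = vel (\<lambda>w. f1 x w t); uu2 = vel (\<lambda>w. f2 x w t);
           TT1 = temp m1 (\<lambda>w. f1 x w t); TT2 = temp m2 (\<lambda>w. f2 x w t)
       in Df2 x v t (v, 1) =
            \<nu>22 * n2 / (n1 + n2) * (maxwellian m2 n2 uu2 TT2 v - f2 x v t)
          + \<nu>21 * n1 / (n1 + n2) *
              (maxwellian m2 n2 (u21 m1 m2 \<epsilon> \<delta> uu1 uu2) (T21 m1 m2 \<epsilon> \<alpha> \<delta> \<gamma> uu1 uu2 TT1 TT2) v
               - f2 x v t))"
  shows "\<forall>x v t. t \<ge> 0 \<longrightarrow> f1 x v t > 0 \<and> f2 x v t > 0"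
proof (intro allI impI conjI)
  fix x v :: "real^'n" and t :: real
  assume t: "t \<ge> 0"
  show "f1 x v t > 0"
  proof (rule char_pos[where f = f1 and Df = Df1 and K = "\<nu>11 + \<nu>12"])
    show "continuous_on (UNIV \<times> {0..}) (\<lambda>p. f1 (fst p) v (snd p))" using cont(1) by blast
    show "\<forall>x v t. t > 0 \<longrightarrow> ((\<lambda>p. f1 (fst p) v (snd p)) has_derivative Df1 x v t) (at (x, t))"
      using diff(1) by blast
    show "\<And>x. f1 x v 0 > 0" using ic(1) init_pos(1) by simp
    show "t \<ge> 0" by fact
  next
    fix y s assume s: "s > 0" "f1 y v s \<ge> 0"
    define n1 where "n1 = dens (\<lambda>w. f1 y w s)"
    define n2 where "n2 = dens (\<lambda>w. f2 y w s)"
    have n: "n1 > 0" "n2 > 0" using dens_pos s by (auto simp: n1_def n2_def)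
    have e: "Df1 y v s (v, 1) =
            \<nu>11 * n1 / (n1 + n2) * (maxwellian m1 n1 (vel (\<lambda>w. f1 y w s)) (temp m1 (\<lambda>w. f1 y w s)) v - f1 y v s)
          + \<nu>12 * n2 / (n2 + n1) *
              (maxwellian m1 n1 (u12 \<delta> (vel (\<lambda>w. f1 y w s)) (vel (\<lambda>w. f2 y w s)))
                 (T12 \<alpha> \<gamma> (vel (\<lambda>w. f1 y w s)) (vel (\<lambda>w. f2 y w s)) (temp m1 (\<lambda>w. f1 y w s)) (temp m2 (\<lambda>w. f2 y w s))) v - f1 y v s)"
      using eq1 s by (simp add: Let_def n1_def n2_def add.commute)
    show "Df1 y v s (v, 1) \<ge> - (\<nu>11 + \<nu>12) * f1 y v s"
      unfolding e
      by (rule bgk_ineq) (use coef_bounds[of \<nu>11 n1 n2] coef_bounds[of \<nu>12 n2 n1] n nu_pos s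
          in \<open>auto simp: maxwellian_nonneg less_imp_le\<close>)
  qed
  show "f2 x v t > 0"
  proof (rule char_pos[where f = f2 and Df = Df2 and K = "\<nu>22 + \<nu>21"])
    show "continuous_on (UNIV \<times> {0..}) (\<lambda>p. f2 (fst p) v (snd p))" using cont(2) by blast
    show "\<forall>x v t. t > 0 \<longrightarrow> ((\<lambda>p. f2 (fst p) v (snd p)) has_derivative Df2 x v t) (at (x, t))"
      using diff(2) by blast
    show "\<And>x. f2 x v 0 > 0" using ic(2) init_pos(2) by simp
    show "t \<ge> 0" by fact
  next
    fix y s assume s: "s > 0" "f2 y v s \<ge> 0"
    define n1 where "n1 = dens (\<lambda>w. f1 y w s)"
    define n2 where "n2 = dens (\<lambda>w. f2 y w s)"
    have n: "n1 > 0" "n2 > 0" using dens_pos s by (auto simp: n1_def n2_def)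
    have e: "Df2 y v s (v, 1) =
            \<nu>22 * n2 / (n2 + n1) * (maxwellian m2 n2 (vel (\<lambda>w. f2 y w s)) (temp m2 (\<lambda>w. f2 y w s)) v - f2 y v s)
          + \<nu>21 * n1 / (n1 + n2) *
              (maxwellian m2 n2 (u21 m1 m2 \<epsilon> \<delta> (vel (\<lambda>w. f1 y w s)) (vel (\<lambda>w. f2 y w s)))
                 (T21 m1 m2 \<epsilon> \<alpha> \<delta> \<gamma> (vel (\<lambda>w. f1 y w s)) (vel (\<lambda>w. f2 y w s)) (temp m1 (\<lambda>w. f1 y w s)) (temp m2 (\<lambda>w. f2 y w s))) v - f2 y v s)"
      using eq2 s by (simp add: Let_def n1_def n2_def add.commute)
    show "Df2 y v s (v, 1) \<ge> - (\<nu>22 + \<nu>21) * f2 y v s"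
      unfolding e
      by (rule bgk_ineq) (use coef_bounds[of \<nu>22 n2 n1] coef_bounds[of \<nu>21 n1 n2] n nu_pos s
          in \<open>auto simp: maxwellian_nonneg less_imp_le\<close>)
  qed
qed

end
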